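(* Let $\mathcal K\in\mathbb N^+$ and $\psi\in(0,1/2]$ be such that $\psi\mathcal K$ is a positive integer, and let $\delta\in(0,1)$. Consider independent samples, each uniform among $\mathcal K$ coupon types. With probability at least $1-\delta$, the number of samples needed to collect all but $\psi\mathcal K$ of the coupon types (that is, to see $\mathcal K(1-\psi)$ distinct types) is at most $$\mathcal K\ln\psi^{-1}+\psi^{-1}\ln\delta^{-1}+\sqrt{2\mathcal K\psi^{-1}\ln\psi^{-1}\ln\delta^{-1}}=O\!\left(\mathcal K\ln\psi^{-1}+\psi^{-1}\ln\delta^{-1}\right).$$ *)

theory Defs
  imports "HOL-Probability.Probability"
begin

text \<open>The first N samples of the coupon collector process over K types:
  a uniformly random function from sample indices {..<N} to types {..<K}
  (equivalently, N independent uniform samples).\<close>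
definition coupon_samples :: "nat \<Rightarrow> nat \<Rightarrow> (nat \<Rightarrow> nat) pmf" where
  "coupon_samples K N = pmf_of_set (PiE {..<N} (\<lambda>_. {..<K}))"

definition distinct_seen :: "nat \<Rightarrow> (nat \<Rightarrow> nat) \<Rightarrow> nat" where
  "distinct_seen N f = card (f ` {..<N})"

end

theory Submission
  imports Defs
begin


lemma HG_deriv:
  fixes \<psi> c0 x :: real
  assumes p: "0 < \<psi>" "\<psi> < 1" and c0: "c0 \<ge> 1 - \<psi>" and x: "x \<ge> 0"
  shows "\<psi> * (1 - c0 / sqrt (c0^2 + 2*x*c0)) \<le> \<psi> * (exp x - 1) / (exp x - \<psi>)"
proof -
  have c0p: "c0 > 0" using c0 p by simp
  have ex: "exp x \<ge> 1 + x" by (rule exp_ge_add_one_self)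
  have d: "exp x - \<psi> \<ge> 1 - \<psi> + x" using ex by simp
  have dpos: "exp x - \<psi> > 0" using p x by (smt (verit) one_le_exp_iff)
  have sq: "(1-\<psi>)^2 * (c0^2 + 2*x*c0) \<le> c0^2 * (exp x - \<psi>)^2"
  proof -
    have "(1-\<psi>)^2 * (c0^2 + 2*x*c0) = c0^2*(1-\<psi>)^2 + 2*x*c0*(1-\<psi>)*(1-\<psi>)" by (simp add: algebra_simps power2_eq_square)
    also have "\<dots> \<le> c0^2*(1-\<psi>)^2 + 2*x*c0*c0*(1-\<psi>)"
    proof -
      have "(1-\<psi>)*(1-\<psi>) \<le> c0*(1-\<psi>)" using c0 p by (intro mult_right_mono) auto
      hence "(2*x*c0)*((1-\<psi>)*(1-\<psi>)) \<le> (2*x*c0)*(c0*(1-\<psi>))" using x c0p by (intro mult_left_mono) auto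
      thus ?thesis by (simp add: algebra_simps)
    qed
    also have "\<dots> \<le> c0^2 * (1-\<psi>+x)^2" using x c0p p by (simp add: power2_eq_square algebra_simps)
    also have "\<dots> \<le> c0^2 * (exp x - \<psi>)^2" using d p x by (intro mult_left_mono power_mono) auto
    finally show ?thesis .
  qed
  have r: "0 < c0^2 + 2*x*c0" using c0p x by (simp add: add_pos_nonneg)
  have "(1-\<psi>) * sqrt (c0^2 + 2*x*c0) \<le> c0 * (exp x - \<psi>)"
  proof -
    have "(1-\<psi>) * sqrt (c0^2 + 2*x*c0) = sqrt ((1-\<psi>)^2 * (c0^2 + 2*x*c0))"
      using p by (simp add: real_sqrt_mult)
    also have "\<dots> \<le> sqrt (c0^2 * (exp x - \<psi>)^2)" using sq by simp
    also have "\<dots> = c0 * (exp x - \<psi>)" using c0p dpos by (simp add: real_sqrt_mult)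
    finally show ?thesis .
  qed
  hence "(1-\<psi>) / (exp x - \<psi>) \<le> c0 / sqrt (c0^2 + 2*x*c0)"
    using dpos r by (simp add: divide_simps mult.commute)
  hence "1 - c0 / sqrt (c0^2 + 2*x*c0) \<le> 1 - (1-\<psi>) / (exp x - \<psi>)" by simp
  also have "1 - (1-\<psi>) / (exp x - \<psi>) = (exp x - 1) / (exp x - \<psi>)" using dpos by (simp add: field_simps)
  finally have "\<psi> * (1 - c0 / sqrt (c0^2 + 2*x*c0)) \<le> \<psi> * ((exp x - 1) / (exp x - \<psi>))"
    using p by (intro mult_left_mono) auto
  thus ?thesis by simp
qed

lemma HG:
  fixes \<psi> c0 sv :: real
  assumes p: "0 < \<psi>" "\<psi> < 1" and c0: "c0 \<ge> 1 - \<psi>" and sv: "sv \<ge> 0"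
  shows "\<psi> * (c0 + sv - sqrt (c0^2 + 2 * sv * c0)) \<le> sv - (1-\<psi>) * ln ((exp sv - \<psi>)/(1-\<psi>))"
proof -
  have c0p: "c0 > 0" using c0 p by simp
  define f where "f x = (x - (1-\<psi>) * (ln (exp x - \<psi>) - ln (1-\<psi>))) - \<psi> * (c0 + x - sqrt (c0^2 + 2*x*c0))" for x
  have D: "DERIV f x :> \<psi> * (exp x - 1) / (exp x - \<psi>) - \<psi> * (1 - c0 / sqrt (c0^2 + 2*x*c0))" if x: "x \<ge> 0" for x
  proof -
    have dpos: "exp x - \<psi> > 0" using p x by (smt (verit) one_le_exp_iff)
    have r: "0 < c0^2 + 2*x*c0" using c0p x by (simp add: add_pos_nonneg)
    have d1: "DERIV (\<lambda>x. ln (exp x - \<psi>)) x :> exp x / (exp x - \<psi>)"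
      using dpos by (auto intro!: derivative_eq_intros)
    have d2: "DERIV (\<lambda>x. sqrt (c0^2 + 2*x*c0)) x :> c0 / sqrt (c0^2 + 2*x*c0)"
      using r by (auto intro!: derivative_eq_intros simp: field_simps)
    have "DERIV f x :> (1 - (1-\<psi>) * (exp x / (exp x - \<psi>) - 0)) - \<psi> * (0 + 1 - c0 / sqrt (c0^2 + 2*x*c0))"
      unfolding f_def
      by (intro DERIV_diff DERIV_cmult DERIV_add d1 d2 DERIV_ident DERIV_const)
    moreover have "(1 - (1-\<psi>) * (exp x / (exp x - \<psi>) - 0)) = \<psi> * (exp x - 1) / (exp x - \<psi>)"
      using dpos by (simp add: field_simps)
    ultimately show ?thesis by simp
  qed
  have "f 0 \<le> f sv"
  proof (rule DERIV_nonneg_imp_increasing_open[OF sv])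
    fix x assume "0 < x" "x < sv"
    hence x0: "x \<ge> 0" by simp
    show "\<exists>y. DERIV f x :> y \<and> y \<ge> 0"
      by (rule exI[of _ "\<psi> * (exp x - 1) / (exp x - \<psi>) - \<psi> * (1 - c0 / sqrt (c0^2 + 2*x*c0))"])
         (use D[OF x0] HG_deriv[OF p c0 x0] in simp)
  next
    show "continuous_on {0..sv} f"
      by (rule DERIV_continuous_on) (use D in \<open>auto intro: has_field_derivative_at_within\<close>)
  qed
  moreover have "f 0 = 0" using c0p p by (simp add: f_def)
  moreover have "exp sv - \<psi> > 0" using p sv by (smt (verit) one_le_exp_iff)
  ultimately show ?thesis using p by (simp add: f_def ln_div)
qed


lemma sum_pow_card:
  fixes x :: real
  assumes "finite A"
  shows "(\<Sum>S\<in>Pow A. x ^ card S) = (1 + x) ^ card A"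
  using assms
proof (induction A rule: finite_induct)
  case empty thus ?case by simp
next
  case (insert a A)
  have inj: "inj_on (insert a) (Pow A)" using insert.hyps
    by (intro inj_onI) (metis Pow_iff insert_absorb insert_ident subsetD)
  have dis: "Pow A \<inter> insert a ` Pow A = {}" using insert.hyps by auto
  have "(\<Sum>S\<in>Pow (insert a A). x ^ card S) = (\<Sum>S\<in>Pow A. x ^ card S) + (\<Sum>S\<in>insert a ` Pow A. x ^ card S)"
    unfolding Pow_insert using insert.hyps dis by (intro sum.union_disjoint) auto
  also have "(\<Sum>S\<in>insert a ` Pow A. x ^ card S) = (\<Sum>S\<in>Pow A. x ^ card (insert a S))"
    using inj by (simp add: sum.reindex)
  also have "\<dots> = (\<Sum>S\<in>Pow A. x * x ^ card S)"
  proof (rule sum.cong[OF refl])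
    fix S assume "S \<in> Pow A"
    hence "finite S" "a \<notin> S" using insert.hyps finite_subset by auto
    thus "x ^ card (insert a S) = x * x ^ card S" by simp
  qed
  finally show ?case using insert by (simp add: sum_distrib_left[symmetric] algebra_simps)
qed

lemma count_bound:
  fixes K N :: nat and t :: real
  assumes K: "K > 0" and t: "t \<ge> 0"
  shows "(\<Sum>f\<in>PiE {..<N} (\<lambda>_. {..<K}). (1+t) ^ card ({..<K} - f ` {..<N}))
           \<le> real K ^ N * (1 + t * (1 - 1/real K) ^ N) ^ K"
proof -
  define \<Omega> where "\<Omega> = PiE {..<N} (\<lambda>_. {..<K})"
  define q where "q = (1 - 1/real K) ^ N"
  have fin: "finite \<Omega>" unfolding \<Omega>_def by (simp add: finite_PiE)
  have "(\<Sum>f\<in>\<Omega>. (1+t) ^ card ({..<K} - f ` {..<N}))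
        = (\<Sum>f\<in>\<Omega>. \<Sum>S\<in>Pow {..<K}. (if S \<subseteq> {..<K} - f ` {..<N} then t ^ card S else 0))"
  proof (rule sum.cong[OF refl])
    fix f assume "f \<in> \<Omega>"
    have "(1+t) ^ card ({..<K} - f ` {..<N}) = (\<Sum>S\<in>Pow ({..<K} - f ` {..<N}). t ^ card S)"
      by (rule sum_pow_card[symmetric]) simp
    also have "\<dots> = (\<Sum>S\<in>Pow {..<K}. (if S \<subseteq> {..<K} - f ` {..<N} then t ^ card S else 0))"
      by (rule sum.mono_neutral_cong_left) auto
    finally show "(1+t) ^ card ({..<K} - f ` {..<N}) = \<dots>" .
  qed
  also have "\<dots> = (\<Sum>S\<in>Pow {..<K}. \<Sum>f\<in>\<Omega>. (if S \<subseteq> {..<K} - f ` {..<N} then t ^ card S else 0))"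
    by (rule sum.swap)
  also have "\<dots> = (\<Sum>S\<in>Pow {..<K}. t ^ card S * real (K - card S) ^ N)"
  proof (rule sum.cong[OF refl])
    fix S assume S: "S \<in> Pow {..<K}"
    have "(\<Sum>f\<in>\<Omega>. (if S \<subseteq> {..<K} - f ` {..<N} then t ^ card S else 0))
          = (\<Sum>f\<in>{f\<in>\<Omega>. S \<subseteq> {..<K} - f ` {..<N}}. t ^ card S)"
      by (rule sum.inter_filter[symmetric, OF fin])
    also have "{f\<in>\<Omega>. S \<subseteq> {..<K} - f ` {..<N}} = PiE {..<N} (\<lambda>_. {..<K} - S)"
      unfolding \<Omega>_def using S by (auto simp: PiE_def Pi_def)
    also have "(\<Sum>f\<in>PiE {..<N} (\<lambda>_. {..<K} - S). t ^ card S) = real (card (PiE {..<N} (\<lambda>_. {..<K} - S))) * t ^ card S"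
      by simp
    also have "card (PiE {..<N} (\<lambda>_. {..<K} - S)) = (K - card S) ^ N"
      using S by (simp add: card_PiE card_Diff_subset finite_subset)
    finally show "(\<Sum>f\<in>\<Omega>. (if S \<subseteq> {..<K} - f ` {..<N} then t ^ card S else 0)) = t ^ card S * real (K - card S) ^ N"
      by simp
  qed
  also have "\<dots> \<le> (\<Sum>S\<in>Pow {..<K}. t ^ card S * (real K ^ N * q ^ card S))"
  proof (rule sum_mono)
    fix S assume S: "S \<in> Pow {..<K}"
    hence cS: "card S \<le> K" using card_mono[of "{..<K}" S] by auto
    have "1 + real (card S) * (- 1/real K) \<le> (1 + (-1/real K)) ^ card S"
      by (rule Bernoulli_inequality) (use K in simp)
    hence b: "1 - real (card S) / real K \<le> (1 - 1/real K) ^ card S" by simp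
    have nn: "0 \<le> 1 - real (card S) / real K" using cS K by (simp add: field_simps)
    have "real (K - card S) = real K * (1 - real (card S) / real K)" using cS K by (simp add: field_simps)
    hence "real (K - card S) ^ N = real K ^ N * (1 - real (card S) / real K) ^ N"
      by (simp add: power_mult_distrib)
    also have "\<dots> \<le> real K ^ N * ((1 - 1/real K) ^ card S) ^ N"
      by (intro mult_left_mono power_mono b nn) simp
    also have "((1 - 1/real K) ^ card S) ^ N = q ^ card S" unfolding q_def
      by (simp add: power_mult[symmetric] mult.commute)
    finally show "t ^ card S * real (K - card S) ^ N \<le> t ^ card S * (real K ^ N * q ^ card S)"
      using t by (intro mult_left_mono) auto
  qed
  also have "\<dots> = real K ^ N * (\<Sum>S\<in>Pow {..<K}. (t * q) ^ card S)"
    by (simp add: sum_distrib_left power_mult_distrib algebra_simps)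
  also have "\<dots> = real K ^ N * (1 + t * q) ^ K"
    by (subst sum_pow_card) simp_all
  finally show ?thesis unfolding \<Omega>_def q_def .
qed

theorem mainTheorem8:
  fixes K :: nat and \<psi> \<delta> :: real
  assumes "K > 0"
    and "0 < \<psi>" and "\<psi> \<le> 1/2"
    and "\<exists>m::nat. m > 0 \<and> \<psi> * real K = real m"
    and "0 < \<delta>" and "\<delta> < 1"
  defines "B \<equiv> real K * ln (1/\<psi>) + (1/\<psi>) * ln (1/\<delta>)
                + sqrt (2 * real K * (1/\<psi>) * ln (1/\<psi>) * ln (1/\<delta>))"
  shows "measure_pmf.prob (coupon_samples K (nat \<lfloor>B\<rfloor>))
           {f. real (distinct_seen (nat \<lfloor>B\<rfloor>) f) \<ge> real K * (1 - \<psi>)} \<ge> 1 - \<delta>"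
proof -
  note K = assms(1) and p0 = assms(2) and p2 = assms(3) and d0 = assms(5) and d1 = assms(6)
  obtain m :: nat where m0: "m > 0" and m: "\<psi> * real K = real m" using assms(4) by blast
  have Kr: "real K > 0" using K by simp
  have p1: "\<psi> < 1" using p2 by simp
  define c0 where "c0 = ln (1/\<psi>)"
  define L where "L = ln (1/\<delta>)"
  define l where "l = L / real K"
  define a where "a = sqrt (2 * l * c0 / \<psi>)"
  define sv where "sv = l / \<psi> + a"
  define N where "N = nat \<lfloor>B\<rfloor>"
  have c0ge: "c0 \<ge> 1 - \<psi>"
    using ln_le_minus_one[OF p0] p0 by (simp add: c0_def ln_div)
  have c0p: "c0 > 0" using c0ge p1 by simp
  have L0: "L \<ge> 0" using d0 d1 by (simp add: L_def)
  have l0: "l \<ge> 0" using L0 Kr by (simp add: l_def)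
  have a0: "a \<ge> 0" using l0 c0p p0 by (simp add: a_def)
  have sv0: "sv \<ge> 0" using l0 a0 p0 by (simp add: sv_def)
  have asq: "a^2 = 2 * l * c0 / \<psi>" using l0 c0p p0 by (simp add: a_def)
  have sqB: "sqrt (2 * real K * (1/\<psi>) * ln (1/\<psi>) * ln (1/\<delta>)) = real K * a"
  proof -
    have "2 * real K * (1/\<psi>) * ln (1/\<psi>) * ln (1/\<delta>) = (real K)^2 * (2 * l * c0 / \<psi>)"
      using Kr by (simp add: l_def c0_def L_def power2_eq_square field_simps)
    hence e: "sqrt (2 * real K * (1/\<psi>) * ln (1/\<psi>) * ln (1/\<delta>)) = sqrt ((real K)^2) * sqrt (2 * l * c0 / \<psi>)"
      by (simp only: real_sqrt_mult)
    show ?thesis unfolding e a_def real_sqrt_abs using Kr by simp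
  qed
  have Beq: "B = real K * (c0 + sv)"
    unfolding B_def sqB using Kr p0 by (simp add: sv_def l_def c0_def L_def field_simps)
  have B0: "B \<ge> 0" using Beq Kr c0p sv0 by simp
  have NB: "real N > B - 1" unfolding N_def using B0 by linarith
  have Gs: "\<psi> * (c0 + sv - sqrt (c0^2 + 2 * sv * c0)) = l"
  proof -
    have "c0^2 + 2 * sv * c0 = (c0 + a)^2" using asq p0 by (simp add: sv_def power2_eq_square field_simps)
    hence "sqrt (c0^2 + 2 * sv * c0) = c0 + a" using c0p a0 by simp
    thus ?thesis using p0 by (simp add: sv_def)
  qed
  define z where "z = (exp sv - \<psi>) / (1 - \<psi>)"
  have z1: "z \<ge> 1" using sv0 p1 by (simp add: z_def field_simps)
  have zp: "z > 0" using z1 by simp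
  have H: "l \<le> sv - (1-\<psi>) * ln z" using HG[OF p0 p1 c0ge sv0] Gs by (simp add: z_def)
  define t where "t = z - 1"
  define Q where "Q = \<psi> * exp (-sv)"
  define q where "q = (1 - 1/real K) ^ N"
  have t0: "t \<ge> 0" using z1 by (simp add: t_def)
  have Q0: "Q \<ge> 0" using p0 by (simp add: Q_def)
  have E1: "1 + t * Q = z * exp (-sv)"
    using p1 by (simp add: t_def Q_def z_def field_simps exp_minus)
  have E2: "q \<le> Q * exp (1/real K)"
  proof -
    have "1 - 1/real K \<le> exp (-(1/real K))" using exp_ge_add_one_self[of "-(1/real K)"] by simp
    moreover have "0 \<le> 1 - 1/real K" using K by (simp add: field_simps)
    ultimately have "q \<le> exp (-(1/real K)) ^ N" unfolding q_def by (intro power_mono)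
    also have "\<dots> = exp (- (real N / real K))" by (simp add: exp_of_nat_mult[symmetric])
    also have "\<dots> \<le> exp (- ((B - 1) / real K))" using NB Kr by (simp add: divide_right_mono)
    also have "\<dots> = exp (-c0) * exp (-sv) * exp (1/real K)"
    proof -
      have "-((B - 1) / real K) = -c0 + -sv + 1/real K" using Kr by (simp add: Beq field_simps)
      thus ?thesis by (simp only: exp_add)
    qed
    also have "exp (-c0) = \<psi>" using p0 by (simp add: c0_def ln_div)
    finally show ?thesis by (simp add: Q_def)
  qed
  have E3: "(1 + t * Q * exp (1/real K)) ^ K \<le> z * (1 + t * Q) ^ K"
  proof -
    define y where "y = t * Q"
    have y0: "y \<ge> 0" using t0 Q0 by (simp add: y_def)
    have yrel: "y = (1 + y) * (\<psi> * (1 - 1/z))"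
      using E1 zp by (simp add: y_def t_def Q_def field_simps)
    have lz: "1 - 1/z \<le> ln z" using ln_le_minus_one[of "1/z"] zp by (simp add: ln_div)
    have lz0: "0 \<le> 1 - 1/z" using z1 by (simp add: field_simps)
    have K2: "real K \<ge> 2"
    proof -
      have "real m \<le> real K / 2" using m p2 Kr by (simp add: mult_right_mono flip: m)
      thus ?thesis using m0 by linarith
    qed
    have eb: "exp (1/real K) \<le> 1 + 2 * (1/real K)"
      by (rule real_exp_bound_lemma) (use K2 in \<open>simp_all add: field_simps\<close>)
    have "1 + y * exp (1/real K) \<le> 1 + y * (1 + 2 * (1/real K))"
      using eb y0 by (intro add_left_mono mult_left_mono) auto
    also have "\<dots> = (1 + y) + 2 * y / real K" by (simp add: field_simps)
    also have "2 * y / real K = 2 * ((1 + y) * (\<psi> * (1 - 1/z))) / real K"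
      by (simp only: yrel[symmetric])
    also have "(1 + y) + 2 * ((1 + y) * (\<psi> * (1 - 1/z))) / real K = (1 + y) + (1 + y) * (2 * \<psi>) * (1 - 1/z) / real K"
      by (simp add: algebra_simps add_divide_distrib)
    also have "\<dots> \<le> (1 + y) + (1 + y) * 1 * ln z / real K"
    proof -
      have "(2 * \<psi>) * (1 - 1/z) \<le> 1 * ln z"
        using p2 p0 lz lz0 by (intro mult_mono) auto
      hence "(1 + y) * ((2 * \<psi>) * (1 - 1/z)) \<le> (1 + y) * (1 * ln z)"
        using y0 by (intro mult_left_mono) auto
      thus ?thesis using Kr by (simp add: divide_right_mono mult.assoc)
    qed
    also have "\<dots> = (1 + y) * (1 + ln z / real K)" by (simp add: field_simps)
    finally have b1: "1 + y * exp (1/real K) \<le> (1 + y) * (1 + ln z / real K)" .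
    have "(1 + y * exp (1/real K)) ^ K \<le> ((1 + y) * (1 + ln z / real K)) ^ K"
      using b1 y0 by (intro power_mono) (auto intro: add_nonneg_nonneg)
    also have "\<dots> = (1 + y) ^ K * (1 + ln z / real K) ^ K" by (simp add: power_mult_distrib)
    also have "\<dots> \<le> (1 + y) ^ K * exp (ln z)"
    proof -
      have "ln z \<ge> 0" using z1 by simp
      hence "(1 + ln z / real K) ^ K \<le> exp (ln z)"
        by (intro exp_ge_one_plus_x_over_n_power_n) (use K in auto)
      thus ?thesis using y0 by (intro mult_left_mono) auto
    qed
    also have "\<dots> = z * (1 + y) ^ K" using zp by simp
    finally show ?thesis by (simp add: y_def mult.assoc)
  qed
  have E4: "(1 + t * Q) ^ K \<le> \<delta> * z ^ m"
  proof -
    have "(1 + t * Q) ^ K = exp (real K * (ln z - sv))"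
    proof -
      have "(1 + t * Q) ^ K = z ^ K * exp (- sv) ^ K" by (simp add: E1 power_mult_distrib)
      also have "z ^ K = exp (real K * ln z)" using zp by (simp add: exp_of_nat_mult)
      also have "exp (- sv) ^ K = exp (real K * (- sv))" by (rule exp_of_nat_mult[symmetric])
      also have "exp (real K * ln z) * exp (real K * (- sv)) = exp (real K * (ln z - sv))"
        by (simp only: exp_add[symmetric] right_diff_distrib diff_conv_add_uminus mult_minus_right distrib_left)
      finally show ?thesis .
    qed
    also have "\<dots> = exp (- L + real m * ln z + - (real K * (sv - (1-\<psi>) * ln z - l)))"
      using Kr by (simp add: l_def algebra_simps flip: m)
    also have "\<dots> = exp (- L) * exp (real m * ln z) * exp (- (real K * (sv - (1-\<psi>) * ln z - l)))"
      by (simp only: exp_add)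
    also have "\<dots> \<le> exp (- L) * exp (real m * ln z) * 1"
      using H Kr by (intro mult_left_mono) auto
    also have "exp (- L) = \<delta>" using d0 by (simp add: L_def ln_div)
    also have "exp (real m * ln z) = z ^ m" using zp by (simp add: exp_of_nat_mult)
    finally show ?thesis by simp
  qed
  define \<Omega> where "\<Omega> = PiE {..<N} (\<lambda>_. {..<K})"
  define Sx where "Sx = {f. real (distinct_seen N f) \<ge> real K * (1 - \<psi>)}"
  have finO: "finite \<Omega>" unfolding \<Omega>_def by (simp add: finite_PiE)
  have neO: "\<Omega> \<noteq> {}" unfolding \<Omega>_def using K by (auto simp: PiE_eq_empty_iff)
  have cardO: "card \<Omega> = K ^ N" unfolding \<Omega>_def by (simp add: card_PiE)
  have cnt: "(\<Sum>f\<in>\<Omega>. z ^ card ({..<K} - f ` {..<N})) \<le> real K ^ N * (1 + t * q) ^ K"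
    using count_bound[OF K t0, of N] by (simp add: \<Omega>_def t_def q_def)
  have F: "real (card (\<Omega> - Sx)) * z ^ (m+1) \<le> (\<Sum>f\<in>\<Omega>. z ^ card ({..<K} - f ` {..<N}))"
  proof -
    have "real (card (\<Omega> - Sx)) * z ^ (m+1) = (\<Sum>f\<in>\<Omega> - Sx. z ^ (m+1))" by simp
    also have "\<dots> \<le> (\<Sum>f\<in>\<Omega> - Sx. z ^ card ({..<K} - f ` {..<N}))"
    proof (rule sum_mono)
      fix f assume f: "f \<in> \<Omega> - Sx"
      hence sub: "f ` {..<N} \<subseteq> {..<K}" by (auto simp: \<Omega>_def PiE_def Pi_def)
      have "real (card (f ` {..<N})) < real K * (1 - \<psi>)" using f by (simp add: Sx_def distinct_seen_def)
      hence "real (card (f ` {..<N})) < real K - real m" by (simp add: algebra_simps flip: m)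
      hence "card (f ` {..<N}) + m + 1 \<le> K" by linarith
      hence "m + 1 \<le> card ({..<K} - f ` {..<N})" using sub by (simp add: card_Diff_subset finite_subset)
      thus "z ^ (m+1) \<le> z ^ card ({..<K} - f ` {..<N})" using z1 by (rule power_increasing)
    qed
    also have "\<dots> \<le> (\<Sum>f\<in>\<Omega>. z ^ card ({..<K} - f ` {..<N}))"
      using finO zp by (intro sum_mono2) auto
    finally show ?thesis .
  qed
  have "(1 + t * q) ^ K \<le> (1 + t * Q * exp (1/real K)) ^ K"
  proof (rule power_mono)
    have "t * q \<le> t * (Q * exp (1/real K))" using E2 t0 by (rule mult_left_mono)
    thus "1 + t * q \<le> 1 + t * Q * exp (1/real K)" by (simp add: mult.assoc)
    have "q \<ge> 0" using K by (simp add: q_def field_simps)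
    thus "0 \<le> 1 + t * q" using t0 by simp
  qed
  also have "\<dots> \<le> z * (1 + t * Q) ^ K" by (rule E3)
  also have "\<dots> \<le> z * (\<delta> * z ^ m)" using E4 zp by (intro mult_left_mono) auto
  finally have big: "(1 + t * q) ^ K \<le> z * (\<delta> * z ^ m)" .
  have "real (card (\<Omega> - Sx)) * z ^ (m+1) \<le> real K ^ N * (1 + t * q) ^ K" using F cnt by linarith
  also have "\<dots> \<le> real K ^ N * (z * (\<delta> * z ^ m))" using big by (rule mult_left_mono) simp
  also have "\<dots> = (real K ^ N * \<delta>) * z ^ (m+1)" by (simp add: algebra_simps)
  finally have "real (card (\<Omega> - Sx)) * z ^ (m+1) \<le> (real K ^ N * \<delta>) * z ^ (m+1)" .
  hence cF: "real (card (\<Omega> - Sx)) \<le> real K ^ N * \<delta>"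
    using zp by (simp add: mult_le_cancel_right)
  have "card \<Omega> = card (\<Omega> \<inter> Sx) + card (\<Omega> - Sx)"
    using finO by (rule card_Int_Diff)
  hence "real (card \<Omega>) = real (card (\<Omega> \<inter> Sx)) + real (card (\<Omega> - Sx))" by simp
  hence cS: "real (card (\<Omega> \<inter> Sx)) \<ge> real K ^ N * (1 - \<delta>)"
    using cF cardO by (simp add: algebra_simps)
  have "measure_pmf.prob (pmf_of_set \<Omega>) Sx = real (card (\<Omega> \<inter> Sx)) / real (card \<Omega>)"
    using finO neO by (simp add: measure_pmf_of_set)
  also have "\<dots> \<ge> 1 - \<delta>" using cS cardO Kr by (simp add: field_simps)
  finally show ?thesis by (simp add: coupon_samples_def \<Omega>_def Sx_def N_def)
qed

end
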